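(* Let $\mathcal{I}$ be an ideal on $\omega$ with $\mathrm{fin} \subseteq \mathcal{I}$. Fix a recursive injection $\sharp : \omega^{<\omega} \to \omega$, and for $f \in \omega^\omega$ let $e(f) \in \omega^\omega$ be the function $e(f)(n) = \sharp(f|_n)$. Suppose $T \subseteq \omega^\omega$ and $C : \omega^\omega \to [\omega]^\omega$ are such that (1) for every $f \in \omega^\omega$: $f \in T$ if and only if for all $g \in \omega^\omega$, $S(C(f), f, e(g)) \in \mathcal{I}$; (2) $C$ is injective and the image of $C$ is an $\mathcal{I}$-AD family. For $f \in \omega^\omega$ define $E(f) \in \omega^\omega$ by $E(f)(n) = f(n)$ if $f \in T$ and $n \in C(f)$, and $E(f)(n) = e(f)(n)$ otherwise. Then $\mathcal{E} = \{E(f) : f \in \omega^\omega\}$ is an $\mathcal{I}$-MED family. Moreover, if $\mathcal{I}$ and $T$ are Borel and $C$ is analytic, then $\mathcal{E}$ is analytic.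
   Context: $\mathrm{fin}$ is the ideal of finite subsets of $\omega$. For an ideal $\mathcal{I}$ on $\omega$, $\mathcal{I}^+ = \mathcal{P}(\omega)\setminus\mathcal{I}$ is the family of $\mathcal{I}$-positive sets. A family $\mathcal{A}$ is $\mathcal{I}$-AD if $\mathcal{A} \subseteq \mathcal{I}^+$ and $A \cap A' \in \mathcal{I}$ for all distinct $A, A' \in \mathcal{A}$. For functions $f,g$ and $X \subseteq \mathrm{dom}(f)\cap\mathrm{dom}(g)$, $S(X,f,g) = \{n \in X : f(n) = g(n)\}$. Functions $f,g \in \omega^\omega$ are $\mathcal{I}$-eventually different ($\mathcal{I}$-ED) if $\{n : f(n) = g(n)\} \in \mathcal{I}$. A set $\mathcal{E} \subseteq \omega^\omega$ is an $\mathcal{I}$-ED family if any two distinct members are $\mathcal{I}$-ED, and an $\mathcal{I}$-MED family ($\mathcal{I}$-maximal eventually different family) if moreover for every $h \in \omega^\omega$ there is $f \in \mathcal{E}$ such that $f,h$ are not $\mathcal{I}$-ED. Ideals are viewed as subsets of $2^\omega$ via characteristic functions when speaking of Borel/analytic. *)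

theory Defs
  imports "HOL-Analysis.Analysis"
begin

definition ideal_on_nat :: "nat set set \<Rightarrow> bool" where
  "ideal_on_nat I \<longleftrightarrow> {} \<in> I \<and> UNIV \<notin> I \<and>
     (\<forall>A B. A \<in> I \<longrightarrow> B \<subseteq> A \<longrightarrow> B \<in> I) \<and>
     (\<forall>A B. A \<in> I \<longrightarrow> B \<in> I \<longrightarrow> A \<union> B \<in> I)"

definition fin :: "nat set set" where
  "fin = {A. finite A}"

definition positive :: "nat set set \<Rightarrow> nat set set" where
  "positive I = UNIV - I"

definition I_AD :: "nat set set \<Rightarrow> nat set set \<Rightarrow> bool" where
  "I_AD I \<A> \<longleftrightarrow> \<A> \<subseteq> positive I \<and> (\<forall>A\<in>\<A>. \<forall>A'\<in>\<A>. A \<noteq> A' \<longrightarrow> A \<inter> A' \<in> I)"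

definition S :: "nat set \<Rightarrow> (nat \<Rightarrow> nat) \<Rightarrow> (nat \<Rightarrow> nat) \<Rightarrow> nat set" where
  "S X f g = {n \<in> X. f n = g n}"

definition I_ED :: "nat set set \<Rightarrow> (nat \<Rightarrow> nat) \<Rightarrow> (nat \<Rightarrow> nat) \<Rightarrow> bool" where
  "I_ED I f g \<longleftrightarrow> {n. f n = g n} \<in> I"

definition I_ED_family :: "nat set set \<Rightarrow> (nat \<Rightarrow> nat) set \<Rightarrow> bool" where
  "I_ED_family I \<E> \<longleftrightarrow> (\<forall>f\<in>\<E>. \<forall>g\<in>\<E>. f \<noteq> g \<longrightarrow> I_ED I f g)"

definition I_MED_family :: "nat set set \<Rightarrow> (nat \<Rightarrow> nat) set \<Rightarrow> bool" where
  "I_MED_family I \<E> \<longleftrightarrow> I_ED_family I \<E> \<and> (\<forall>h. \<exists>f\<in>\<E>. \<not> I_ED I f h)"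

definition restr :: "(nat \<Rightarrow> nat) \<Rightarrow> nat \<Rightarrow> nat list" where
  "restr f n = map f [0..<n]"

definition enc :: "(nat list \<Rightarrow> nat) \<Rightarrow> (nat \<Rightarrow> nat) \<Rightarrow> nat \<Rightarrow> nat" where
  "enc code f n = code (restr f n)"

text \<open>Subsets of omega viewed as points of Cantor space 2^omega via characteristic functions.\<close>
definition chi :: "nat set \<Rightarrow> nat \<Rightarrow> bool" where
  "chi A = (\<lambda>n. n \<in> A)"

definition borel_family :: "nat set set \<Rightarrow> bool" where
  "borel_family I \<longleftrightarrow> chi ` I \<in> sets (borel :: (nat \<Rightarrow> bool) measure)"

definition analytic :: "'a::topological_space set \<Rightarrow> bool" where
  "analytic X \<longleftrightarrow> X = {} \<or>
     (\<exists>g :: (nat \<Rightarrow> nat) \<Rightarrow> 'a. continuous_on UNIV g \<and> range g = X)"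

definition analytic_map :: "((nat \<Rightarrow> nat) \<Rightarrow> nat set) \<Rightarrow> bool" where
  "analytic_map C \<longleftrightarrow> analytic {(f, chi (C f)) | f. True}"

end

theory Submission imports Defs "HOL-Library.Nat_Bijection" "HOL-Library.Countable"
begin

lemma open_init: "open {y::nat \<Rightarrow> 'a::discrete_topology. \<forall>j<n. y j = x j}"
proof -
  have "open {f::nat \<Rightarrow> 'a. \<forall>i\<in>{..<n}. f (id i) \<in> {x i}}"
    by (rule product_topology_basis') (auto intro: open_discrete)
  moreover have "{f::nat \<Rightarrow> 'a. \<forall>i\<in>{..<n}. f (id i) \<in> {x i}} = {y. \<forall>j<n. y j = x j}" by auto
  ultimately show ?thesis by simp
qed

lemma open_coord: "open {y::'i \<Rightarrow> 'a::discrete_topology. y i = b}"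
proof -
  have "open {f::'i \<Rightarrow> 'a. \<forall>k\<in>{i}. f (id k) \<in> {b}}"
    by (rule product_topology_basis') (auto intro: open_discrete)
  moreover have "{f::'i \<Rightarrow> 'a. \<forall>k\<in>{i}. f (id k) \<in> {b}} = {y. y i = b}" by auto
  ultimately show ?thesis by simp
qed

lemma nbhd_init:
  fixes U :: "(nat \<Rightarrow> 'a::topological_space) set"
  assumes "open U" "x \<in> U"
  shows "\<exists>n. \<forall>y. (\<forall>j<n. y j = x j) \<longrightarrow> y \<in> U"
proof -
  from product_topology_open_contains_basis[of "\<lambda>i. euclidean" UNIV U x] assms
  obtain X where X: "x \<in> (\<Pi>\<^sub>E i\<in>UNIV. X i)" "\<forall>i. openin euclidean (X i)"
     "finite {i. X i \<noteq> topspace euclidean}" "(\<Pi>\<^sub>E i\<in>UNIV. X i) \<subseteq> U"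
    unfolding open_fun_def by blast
  from X(3) obtain n where n: "\<forall>i\<in>{i. X i \<noteq> UNIV}. i < n"
    using finite_nat_set_iff_bounded by auto
  show ?thesis
  proof (intro exI allI impI)
    fix y :: "nat \<Rightarrow> 'a" assume y: "\<forall>j<n. y j = x j"
    have "y \<in> (\<Pi>\<^sub>E i\<in>UNIV. X i)"
    proof (auto simp: PiE_iff)
      fix i show "y i \<in> X i"
      proof (cases "i < n")
        case True then show ?thesis using y X(1) by auto
      next
        case False then have "X i = UNIV" using n by auto
        then show ?thesis by simp
      qed
    qed
    then show "y \<in> U" using X(4) by blast
  qed
qed

lemma cont_glue:
  fixes h :: "'a::topological_space \<Rightarrow> 'b::topological_space"
  assumes "\<And>x. \<exists>U \<phi>. open U \<and> x \<in> U \<and> continuous_on UNIV \<phi> \<and> (\<forall>y\<in>U. h y = \<phi> y)"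
  shows "continuous_on UNIV h"
  unfolding continuous_on_topological
proof (intro ballI allI impI)
  fix x B assume B: "open B" "h x \<in> B"
  obtain U \<phi> where U: "open U" "x \<in> U" "continuous_on UNIV \<phi>" "\<forall>y\<in>U. h y = \<phi> y"
    using assms by blast
  then have "\<phi> x \<in> B" using B by auto
  then obtain A where A: "open A" "x \<in> A" "\<forall>y\<in>UNIV. y \<in> A \<longrightarrow> \<phi> y \<in> B"
    using U(3) B(1) unfolding continuous_on_topological by blast
  show "\<exists>A. open A \<and> x \<in> A \<and> (\<forall>y\<in>UNIV. y \<in> A \<longrightarrow> h y \<in> B)"
    by (rule exI[of _ "U \<inter> A"]) (use U A in auto)
qed

lemma cont_locconst:
  fixes h :: "'a::topological_space \<Rightarrow> 'b::topological_space"
  assumes "\<And>x. \<exists>U. open U \<and> x \<in> U \<and> (\<forall>y\<in>U. h y = h x)"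
  shows "continuous_on UNIV h"
proof (rule cont_glue)
  fix x
  obtain U where U: "open U" "x \<in> U" "\<forall>y\<in>U. h y = h x" using assms by blast
  show "\<exists>U \<phi>. open U \<and> x \<in> U \<and> continuous_on UNIV \<phi> \<and> (\<forall>y\<in>U. h y = \<phi> y)"
    using U continuous_on_const[of UNIV "h x"] by blast
qed

lemma cont_init:
  fixes h :: "(nat \<Rightarrow> 'c::discrete_topology) \<Rightarrow> 'b::topological_space"
  assumes "\<And>x. \<exists>n. \<forall>y. (\<forall>j<n. y j = x j) \<longrightarrow> h y = h x"
  shows "continuous_on UNIV h"
proof (rule cont_locconst)
  fix x
  obtain n where n: "\<forall>y. (\<forall>j<n. y j = x j) \<longrightarrow> h y = h x" using assms by blast
  have o: "open {y. \<forall>j<n. y j = x j}" by (rule open_init)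
  have m: "x \<in> {y. \<forall>j<n. y j = x j}" by simp
  have e: "\<forall>y\<in>{y. \<forall>j<n. y j = x j}. h y = h x" using n by blast
  show "\<exists>U. open U \<and> x \<in> U \<and> (\<forall>y\<in>U. h y = h x)"
    using o m e by blast
qed


definition okF :: "(nat \<Rightarrow> nat) set \<Rightarrow> nat list \<Rightarrow> bool" where
  "okF F s \<longleftrightarrow> (\<exists>y\<in>F. \<forall>j<length s. y j = s!j)"

fun pre :: "(nat \<Rightarrow> nat) set \<Rightarrow> (nat \<Rightarrow> nat) \<Rightarrow> nat \<Rightarrow> nat list" where
  "pre F x 0 = []"
| "pre F x (Suc n) = (if okF F (pre F x n @ [x n]) then pre F x n @ [x n]
      else pre F x n @ [LEAST k. okF F (pre F x n @ [k])])"

definition retr :: "(nat \<Rightarrow> nat) set \<Rightarrow> (nat \<Rightarrow> nat) \<Rightarrow> nat \<Rightarrow> nat" where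
  "retr F x n = pre F x (Suc n) ! n"

lemma len_pre[simp]: "length (pre F x n) = n"
  by (induction n) auto

lemma ok_step: "okF F s \<Longrightarrow> \<exists>k. okF F (s @ [k])"
proof -
  assume "okF F s"
  then obtain y where y: "y \<in> F" "\<forall>j<length s. y j = s!j" unfolding okF_def by blast
  have "okF F (s @ [y (length s)])" unfolding okF_def
    using y by (auto intro!: bexI[of _ y] simp: nth_append less_Suc_eq)
  then show ?thesis by blast
qed

lemma ok_pre: "F \<noteq> {} \<Longrightarrow> okF F (pre F x n)"
proof (induction n)
  case 0 then show ?case by (auto simp: okF_def)
next
  case (Suc n)
  then obtain k where "okF F (pre F x n @ [k])" using ok_step by blast
  then have "okF F (pre F x n @ [LEAST k. okF F (pre F x n @ [k])])" by (rule LeastI)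
  then show ?case by simp
qed

lemma pre_prefix: "n \<le> m \<Longrightarrow> j < n \<Longrightarrow> pre F x m ! j = pre F x n ! j"
proof (induction m rule: dec_induct)
  case base then show ?case by simp
next
  case (step m)
  then show ?case by (simp add: nth_append)
qed

lemma retr_pre: "j < n \<Longrightarrow> retr F x j = pre F x n ! j"
  unfolding retr_def by (metis Suc_leI lessI pre_prefix)

lemma retr_in:
  assumes "closed F" "F \<noteq> {}"
  shows "retr F x \<in> F"
proof (rule ccontr)
  assume "retr F x \<notin> F"
  then obtain n where n: "\<forall>y. (\<forall>j<n. y j = retr F x j) \<longrightarrow> y \<in> - F"
    using nbhd_init[of "- F" "retr F x"] assms(1) by (auto simp: closed_def)
  from ok_pre[OF assms(2), of x n] obtain y where "y \<in> F" "\<forall>j<n. y j = pre F x n ! j"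
    unfolding okF_def by auto
  then show False using n retr_pre by (metis ComplD)
qed

lemma pre_id: "x \<in> F \<Longrightarrow> pre F x n = map x [0..<n]"
proof (induction n)
  case 0 then show ?case by simp
next
  case (Suc n)
  have "okF F (map x [0..<n] @ [x n])" unfolding okF_def
    using Suc.prems by (auto intro!: bexI[of _ x] simp: nth_append less_Suc_eq)
  then show ?case using Suc by simp
qed

lemma retr_id: "x \<in> F \<Longrightarrow> retr F x = x"
proof (rule ext)
  fix n assume "x \<in> F"
  then have "pre F x (Suc n) = map x [0..<Suc n]" by (rule pre_id)
  then show "retr F x n = x n" unfolding retr_def by (simp del: upt_Suc pre.simps)
qed

lemma pre_local: "\<forall>j<n. y j = x j \<Longrightarrow> pre F y n = pre F x n"
  by (induction n) auto

lemma retr_cont: "continuous_on UNIV (retr F)"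
proof (rule continuous_on_coordinatewise_then_product)
  fix i
  show "continuous_on UNIV (\<lambda>x. retr F x i)"
  proof (rule cont_init)
    fix x
    have "\<forall>y. (\<forall>j<Suc i. y j = x j) \<longrightarrow> retr F y i = retr F x i"
    proof (intro allI impI)
      fix y assume "\<forall>j<Suc i. y j = x j"
      then have "pre F y (Suc i) = pre F x (Suc i)" by (rule pre_local)
      then show "retr F y i = retr F x i" unfolding retr_def by (simp del: pre.simps)
    qed
    then show "\<exists>n. \<forall>y. (\<forall>j<n. y j = x j) \<longrightarrow> retr F y i = retr F x i" by blast
  qed
qed

lemma closed_analytic:
  fixes F :: "(nat \<Rightarrow> nat) set"
  assumes "closed F"
  shows "analytic F"
proof (cases "F = {}")
  case True then show ?thesis by (simp add: analytic_def)
next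
  case False
  have "range (retr F) = F"
    using retr_in[OF assms False] retr_id by (metis image_subsetI subsetI subset_antisym rangeI)
  then show ?thesis unfolding analytic_def using retr_cont by blast
qed


lemma analytic_img:
  fixes h :: "'a::topological_space \<Rightarrow> 'b::topological_space"
  assumes "analytic A" "continuous_on UNIV h"
  shows "analytic (h ` A)"
proof (cases "A = {}")
  case True then show ?thesis by (simp add: analytic_def)
next
  case False
  then obtain g :: "(nat \<Rightarrow> nat) \<Rightarrow> 'a" where g: "continuous_on UNIV g" "range g = A"
    using assms(1) unfolding analytic_def by blast
  have "continuous_on UNIV (h \<circ> g)"
    by (rule continuous_on_compose[OF g(1) continuous_on_subset[OF assms(2) subset_UNIV]])
  moreover have "range (h \<circ> g) = h ` A" using g(2) image_comp[of h g UNIV] by simp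
  ultimately show ?thesis unfolding analytic_def by blast
qed

lemma cont_tail: "continuous_on UNIV (\<lambda>y::nat \<Rightarrow> 'a::topological_space. \<lambda>m. y (Suc m))"
  by (intro continuous_on_coordinatewise_then_product continuous_on_product_coordinates)

lemma analytic_UN:
  fixes A :: "nat \<Rightarrow> 'a::topological_space set"
  assumes "\<And>n. analytic (A n)"
  shows "analytic (\<Union>n. A n)"
proof (cases "\<forall>n. A n = {}")
  case True then show ?thesis by (simp add: analytic_def)
next
  case False
  then obtain n0 where n0: "A n0 \<noteq> {}" by blast
  define A' where "A' n = (if A n = {} then A n0 else A n)" for n
  have ex: "\<exists>g :: (nat \<Rightarrow> nat) \<Rightarrow> 'a. continuous_on UNIV g \<and> range g = A' n" for n
  proof (cases "A n = {}")
    case True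
    then show ?thesis using assms[of n0] n0 unfolding analytic_def A'_def by simp
  next
    case False
    then show ?thesis using assms[of n] unfolding analytic_def A'_def by simp
  qed
  define G :: "nat \<Rightarrow> (nat \<Rightarrow> nat) \<Rightarrow> 'a" where "G n = (SOME g. continuous_on UNIV g \<and> range g = A' n)" for n
  have G: "continuous_on UNIV (G n)" "range (G n) = A' n" for n
    using someI_ex[OF ex[of n]] unfolding G_def by blast+
  define h where "h y = G (y 0) (\<lambda>m. y (Suc m))" for y
  have "continuous_on UNIV h"
  proof (rule cont_glue)
    fix x :: "nat \<Rightarrow> nat"
    show "\<exists>U \<phi>. open U \<and> x \<in> U \<and> continuous_on UNIV \<phi> \<and> (\<forall>y\<in>U. h y = \<phi> y)"
    proof (intro exI conjI)
      show "open {y::nat \<Rightarrow> nat. y 0 = x 0}" by (rule open_coord)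
      show "continuous_on UNIV (G (x 0) \<circ> (\<lambda>y::nat \<Rightarrow> nat. \<lambda>m. y (Suc m)))"
        by (rule continuous_on_compose[OF cont_tail continuous_on_subset[OF G(1) subset_UNIV]])
    qed (auto simp: h_def)
  qed
  moreover have "range h = (\<Union>n. A n)"
  proof
    show "range h \<subseteq> (\<Union>n. A n)"
      using G(2) unfolding h_def A'_def by (force split: if_splits)
  next
    show "(\<Union>n. A n) \<subseteq> range h"
    proof
      fix z assume "z \<in> (\<Union>n. A n)"
      then obtain n where "z \<in> A n" by blast
      then have "z \<in> range (G n)" using G(2) A'_def by auto
      then obtain w where w: "z = G n w" by blast
      have "h (\<lambda>k. case k of 0 \<Rightarrow> n | Suc m \<Rightarrow> w m) = z" using w by (simp add: h_def)
      then show "z \<in> range h" by blast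
    qed
  qed
  ultimately show ?thesis unfolding analytic_def by blast
qed

lemma analytic_Un:
  fixes X Y :: "'a::topological_space set"
  assumes "analytic X" "analytic Y"
  shows "analytic (X \<union> Y)"
proof -
  define F where "F n = (if n = 0 then X else Y)" for n :: nat
  have "analytic (F n)" for n using assms by (simp add: F_def)
  then have "analytic (\<Union>n. F n)" by (rule analytic_UN)
  moreover have "(\<Union>n. F n) = X \<union> Y"
  proof (rule equalityI)
    show "(\<Union>n. F n) \<subseteq> X \<union> Y" by (auto simp: F_def split: if_splits)
    show "X \<union> Y \<subseteq> (\<Union>n. F n)"
    proof
      fix z assume "z \<in> X \<union> Y"
      then show "z \<in> (\<Union>n. F n)"
      proof
        assume "z \<in> X"
        then show ?thesis by (intro UN_I[of 0]) (simp_all add: F_def)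
      next
        assume "z \<in> Y"
        then show ?thesis by (intro UN_I[of "Suc 0"]) (simp_all add: F_def)
      qed
    qed
  qed
  ultimately show ?thesis by simp
qed

definition split_seq :: "(nat \<Rightarrow> nat) \<Rightarrow> nat \<Rightarrow> nat \<Rightarrow> nat" where
  "split_seq x n = (\<lambda>m. x (prod_encode (n, m)))"

definition join_seq :: "(nat \<Rightarrow> nat \<Rightarrow> nat) \<Rightarrow> nat \<Rightarrow> nat" where
  "join_seq w = (\<lambda>k. w (fst (prod_decode k)) (snd (prod_decode k)))"

lemma split_join[simp]: "split_seq (join_seq w) n = w n"
  by (rule ext) (simp add: split_seq_def join_seq_def)

lemma cont_split: "continuous_on UNIV (\<lambda>x. split_seq x n)"
  unfolding split_seq_def
  by (intro continuous_on_coordinatewise_then_product continuous_on_product_coordinates)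

lemma closed_eq_fun:
  fixes f g :: "'c::topological_space \<Rightarrow> nat \<Rightarrow> 'b::discrete_topology"
  assumes f: "continuous_on UNIV f" and g: "continuous_on UNIV g"
  shows "closed {x. f x = g x}"
proof -
  have "{x. f x = g x} = (\<Inter>i. {x. f x i = g x i})" by (auto simp: fun_eq_iff)
  moreover have "closed (\<Inter>i. {x. f x i = g x i})"
  proof (rule closed_INT, rule ballI)
    fix i :: nat assume "i \<in> UNIV"
    show "closed {x. f x i = g x i}"
      by (rule closed_Collect_eq[OF continuous_on_product_then_coordinatewise[OF f]
            continuous_on_product_then_coordinatewise[OF g]])
  qed
  ultimately show ?thesis by simp
qed

lemma analytic_INT:
  fixes A :: "nat \<Rightarrow> (nat \<Rightarrow> nat) set"
  assumes "\<And>n. analytic (A n)"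
  shows "analytic (\<Inter>n. A n)"
proof (cases "\<exists>n. A n = {}")
  case True then have "(\<Inter>n. A n) = {}" by blast
  then show ?thesis by (simp add: analytic_def)
next
  case False
  have ex: "\<exists>g :: (nat \<Rightarrow> nat) \<Rightarrow> (nat \<Rightarrow> nat). continuous_on UNIV g \<and> range g = A n" for n
    using assms[of n] False unfolding analytic_def by simp
  define G :: "nat \<Rightarrow> (nat \<Rightarrow> nat) \<Rightarrow> (nat \<Rightarrow> nat)" where "G n = (SOME g. continuous_on UNIV g \<and> range g = A n)" for n
  have G: "continuous_on UNIV (G n)" "range (G n) = A n" for n
    using someI_ex[OF ex[of n]] unfolding G_def by blast+
  have cG: "continuous_on UNIV (\<lambda>x. G n (split_seq x n))" for n
    by (rule continuous_on_compose2[OF G(1) cont_split]) simp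
  define K where "K = (\<Inter>n. {x. G n (split_seq x n) = G 0 (split_seq x 0)})"
  have Kc: "closed K" unfolding K_def
    by (intro closed_INT ballI closed_eq_fun cG)
  have build: "\<exists>x\<in>K. G 0 (split_seq x 0) = z" if z: "z \<in> (\<Inter>n. A n)" for z
  proof -
    have "\<exists>w. G n w = z" for n
    proof -
      have "z \<in> range (G n)" using z G(2)[of n] by blast
      then show ?thesis by blast
    qed
    then obtain w where w: "\<And>n. G n (w n) = z" using choice[of "\<lambda>n w. G n w = z"] by blast
    show ?thesis by (rule bexI[of _ "join_seq w"]) (auto simp: K_def w)
  qed
  show ?thesis
  proof (cases "K = {}")
    case True
    then have "(\<Inter>n. A n) = {}" using build by blast
    then show ?thesis by (simp add: analytic_def)
  next
    case Kne: False
    define h where "h x = G 0 (split_seq (retr K x) 0)" for x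
    have "continuous_on UNIV h" unfolding h_def
      by (rule continuous_on_compose2[OF cG[of 0] retr_cont]) simp
    moreover have "range h = (\<Inter>n. A n)"
    proof
      show "range h \<subseteq> (\<Inter>n. A n)"
      proof
        fix z assume "z \<in> range h"
        then obtain x where x: "z = h x" by blast
        have "retr K x \<in> K" by (rule retr_in[OF Kc Kne])
        then have eq: "\<And>n. G n (split_seq (retr K x) n) = G 0 (split_seq (retr K x) 0)" unfolding K_def by blast
        show "z \<in> (\<Inter>n. A n)"
        proof
          fix n
          have "z = G n (split_seq (retr K x) n)" unfolding x h_def eq[of n] by (rule refl)
          then show "z \<in> A n" using G(2)[of n] by blast
        qed
      qed
    next
      show "(\<Inter>n. A n) \<subseteq> range h"
      proof
        fix z assume "z \<in> (\<Inter>n. A n)"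
        then obtain x where "x \<in> K" "G 0 (split_seq x 0) = z" using build by blast
        then have "h x = z" unfolding h_def using retr_id[of x K] by simp
        then show "z \<in> range h" by blast
      qed
    qed
    ultimately show ?thesis unfolding analytic_def by blast
  qed
qed


lemma cyl_analytic: "analytic {y::nat \<Rightarrow> nat. \<forall>j<length s. y j = s!j}"
proof -
  define g where "g x = (\<lambda>j. if j < length s then s!j else x j)" for x :: "nat \<Rightarrow> nat"
  have "continuous_on UNIV g" unfolding g_def
  proof (intro continuous_on_coordinatewise_then_product)
    fix i show "continuous_on UNIV (\<lambda>x::nat \<Rightarrow> nat. if i < length s then s ! i else x i)"
      by (cases "i < length s") auto
  qed
  moreover have "range g = {y. \<forall>j<length s. y j = s!j}"
  proof
    show "range g \<subseteq> {y. \<forall>j<length s. y j = s!j}" by (auto simp: g_def)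
    show "{y. \<forall>j<length s. y j = s!j} \<subseteq> range g"
    proof
      fix y assume "y \<in> {y. \<forall>j<length s. y j = s!j}"
      then have "g y = y" by (auto simp: g_def)
      then show "y \<in> range g" by (metis rangeI)
    qed
  qed
  ultimately show ?thesis unfolding analytic_def by blast
qed

lemma open_analytic:
  fixes S :: "(nat \<Rightarrow> nat) set"
  assumes "open S"
  shows "analytic S"
proof -
  define B where "B n = (let s = (from_nat n :: nat list) in
     if {y. \<forall>j<length s. y j = s!j} \<subseteq> S then {y. \<forall>j<length s. y j = s!j} else {})" for n
  have "analytic (B n)" for n
    unfolding B_def Let_def using cyl_analytic by (simp add: analytic_def)
  then have "analytic (\<Union>n. B n)" by (rule analytic_UN)
  moreover have "(\<Union>n. B n) = S"
  proof
    show "(\<Union>n. B n) \<subseteq> S" by (auto simp: B_def Let_def split: if_splits)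
    show "S \<subseteq> (\<Union>n. B n)"
    proof
      fix x assume "x \<in> S"
      then obtain n where n: "\<forall>y. (\<forall>j<n. y j = x j) \<longrightarrow> y \<in> S"
        using nbhd_init assms by blast
      define s where "s = map x [0..<n]"
      have "{y. \<forall>j<length s. y j = s!j} \<subseteq> S" using n by (auto simp: s_def)
      then have "B (to_nat s) = {y. \<forall>j<length s. y j = s!j}" by (simp add: B_def)
      moreover have "x \<in> {y. \<forall>j<length s. y j = s!j}" by (simp add: s_def)
      ultimately show "x \<in> (\<Union>n. B n)" by blast
    qed
  qed
  ultimately show ?thesis by simp
qed

lemma borel_analytic:
  fixes A :: "(nat \<Rightarrow> nat) set"
  assumes "A \<in> sets borel"
  shows "analytic A"
proof -
  have "A \<in> sigma_sets UNIV {S. open S}" using assms by (simp add: sets_borel)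
  then have "analytic A \<and> analytic (- A)"
  proof (induction rule: sigma_sets.induct)
    case (Basic a)
    then show ?case using open_analytic closed_analytic by (auto simp: closed_Compl)
  next
    case Empty
    have "analytic (UNIV::(nat \<Rightarrow> nat) set)" unfolding analytic_def
      by (rule disjI2, rule exI[of _ id]) simp
    then show ?case by (simp add: analytic_def)
  next
    case (Compl a)
    then show ?case by (simp add: Compl_eq_Diff_UNIV[symmetric])
  next
    case (Union a)
    then have "analytic (\<Union>i. a i)" by (intro analytic_UN) auto
    moreover have "analytic (\<Inter>i. - a i)" by (rule analytic_INT) (use Union in blast)
    ultimately show ?case by simp
  qed
  then show ?thesis by simp
qed


lemma enc_local: "\<forall>j<n. y j = x j \<Longrightarrow> enc code y n = enc code x n"
  unfolding enc_def restr_def by (intro arg_cong[where f=code] map_cong) auto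

lemma enc_cont: "continuous_on UNIV (enc code)"
proof (rule continuous_on_coordinatewise_then_product)
  fix i show "continuous_on UNIV (\<lambda>x. enc code x i)"
    by (rule cont_init) (auto intro!: exI[of _ i] enc_local)
qed

lemma Psi_cont: "continuous_on UNIV
   (\<lambda>p::(nat \<Rightarrow> nat) \<times> (nat \<Rightarrow> bool). \<lambda>n. if snd p n then fst p n else enc code (fst p) n)"
proof (rule continuous_on_coordinatewise_then_product)
  fix n
  show "continuous_on UNIV (\<lambda>p::(nat \<Rightarrow> nat) \<times> (nat \<Rightarrow> bool). if snd p n then fst p n else enc code (fst p) n)"
  proof (rule cont_locconst)
    fix p :: "(nat \<Rightarrow> nat) \<times> (nat \<Rightarrow> bool)"
    let ?U = "snd -` {c::nat \<Rightarrow> bool. c n = snd p n} \<inter> fst -` {y::nat \<Rightarrow> nat. \<forall>j<Suc n. y j = fst p j}"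
    have "open ?U" by (intro open_Int open_vimage_snd open_vimage_fst open_coord open_init)
    moreover have "p \<in> ?U" by simp
    moreover have "\<forall>q\<in>?U. (if snd q n then fst q n else enc code (fst q) n) = (if snd p n then fst p n else enc code (fst p) n)"
      by (auto intro!: enc_local)
    ultimately show "\<exists>U. open U \<and> p \<in> U \<and> (\<forall>q\<in>U. (if snd q n then fst q n else enc code (fst q) n) = (if snd p n then fst p n else enc code (fst p) n))"
      by blast
  qed
qed

theorem lemma3p1:
  fixes I :: "nat set set"
    and code :: "nat list \<Rightarrow> nat"
    and T :: "(nat \<Rightarrow> nat) set"
    and C :: "(nat \<Rightarrow> nat) \<Rightarrow> nat set"
    and E :: "(nat \<Rightarrow> nat) \<Rightarrow> nat \<Rightarrow> nat"
  assumes ideal: "ideal_on_nat I"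
    and fin_sub: "fin \<subseteq> I"
    and code_inj: "inj code"
    and C_inf: "\<And>f. infinite (C f)"
    and T_char: "\<And>f. f \<in> T \<longleftrightarrow> (\<forall>g. S (C f) f (enc code g) \<in> I)"
    and C_inj: "inj C"
    and C_AD: "I_AD I (range C)"
    and E_def: "\<And>f n. E f n = (if f \<in> T \<and> n \<in> C f then f n else enc code f n)"
  shows "I_MED_family I (range E) \<and>
         (borel_family I \<and> T \<in> sets (borel :: (nat \<Rightarrow> nat) measure) \<and> analytic_map C
            \<longrightarrow> analytic (range E))"
proof
  have sub: "\<And>A B. A \<in> I \<Longrightarrow> B \<subseteq> A \<Longrightarrow> B \<in> I" and un: "\<And>A B. A \<in> I \<Longrightarrow> B \<in> I \<Longrightarrow> A \<union> B \<in> I"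
    using ideal unfolding ideal_on_nat_def by blast+
  have empI: "{} \<in> I" using ideal unfolding ideal_on_nat_def by blast
  have finI: "finite A \<Longrightarrow> A \<in> I" for A using fin_sub by (auto simp: fin_def)
  have pos: "C f \<notin> I" for f using C_AD unfolding I_AD_def positive_def by auto
  have ADI: "C f \<noteq> C g \<Longrightarrow> C f \<inter> C g \<in> I" for f g using C_AD unfolding I_AD_def by auto
  have ED: "I_ED_family I (range E)"
    unfolding I_ED_family_def
  proof (intro ballI impI)
    fix u v assume "u \<in> range E" "v \<in> range E" "u \<noteq> v"
    then obtain a b where ab: "u = E a" "v = E b" "a \<noteq> b" by blast
    then obtain k where k: "a k \<noteq> b k" by blast
    define X2 where "X2 = (if a \<in> T then S (C a) a (enc code b) else {})"
    define X3 where "X3 = (if b \<in> T then S (C b) b (enc code a) else {})"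
    define X4 where "X4 = (if a \<in> T \<and> b \<in> T then C a \<inter> C b else {})"
    have "X2 \<in> I" using T_char empI by (auto simp: X2_def)
    moreover have "X3 \<in> I" using T_char empI by (auto simp: X3_def)
    moreover have "X4 \<in> I" using ADI empI ab(3) C_inj by (auto simp: X4_def inj_eq)
    moreover have "{..k} \<in> I" by (rule finI) simp
    ultimately have big: "{..k} \<union> X2 \<union> X3 \<union> X4 \<in> I" using un by blast
    have "{n. E a n = E b n} \<subseteq> {..k} \<union> X2 \<union> X3 \<union> X4"
    proof
      fix n assume n: "n \<in> {n. E a n = E b n}"
      show "n \<in> {..k} \<union> X2 \<union> X3 \<union> X4"
      proof (cases "a \<in> T \<and> n \<in> C a")
        case A: True
        show ?thesis
        proof (cases "b \<in> T \<and> n \<in> C b")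
          case True then have "n \<in> X4" using A by (simp add: X4_def)
          then show ?thesis by blast
        next
          case False
          have "E a n = a n" unfolding E_def[of a n] using A by (rule if_P)
          moreover have "E b n = enc code b n" unfolding E_def[of b n] using False by (rule if_not_P)
          ultimately have "a n = enc code b n" using n by simp
          then have "n \<in> X2" using A by (simp add: X2_def S_def)
          then show ?thesis by blast
        qed
      next
        case A: False
        show ?thesis
        proof (cases "b \<in> T \<and> n \<in> C b")
          case True
          have "E a n = enc code a n" unfolding E_def[of a n] using A by (rule if_not_P)
          moreover have "E b n = b n" unfolding E_def[of b n] using True by (rule if_P)
          ultimately have "b n = enc code a n" using n by simp
          then have "n \<in> X3" using True by (simp add: X3_def S_def)
          then show ?thesis by blast
        next
          case False
          have "E a n = enc code a n" unfolding E_def[of a n] using A by (rule if_not_P)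
          moreover have "E b n = enc code b n" unfolding E_def[of b n] using False by (rule if_not_P)
          ultimately have "enc code a n = enc code b n" using n by simp
          then have "restr a n = restr b n" using code_inj by (simp add: enc_def inj_eq)
          then have "\<forall>j<n. a j = b j" by (simp add: restr_def)
          then have "n \<le> k" using k by (meson not_le)
          then show ?thesis by simp
        qed
      qed
    qed
    then have "{n. E a n = E b n} \<in> I" using sub big by blast
    then show "I_ED I u v" unfolding I_ED_def ab by simp
  qed
  have MAX: "\<forall>h. \<exists>f\<in>range E. \<not> I_ED I f h"
  proof
    fix h
    show "\<exists>f\<in>range E. \<not> I_ED I f h"
    proof (cases "h \<in> T")
      case True
      then have "C h \<subseteq> {n. E h n = h n}" using E_def by auto
      then have "{n. E h n = h n} \<notin> I" using pos sub by blast
      then show ?thesis unfolding I_ED_def by blast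
    next
      case False
      then obtain g where g: "S (C h) h (enc code g) \<notin> I" using T_char by blast
      show ?thesis
      proof (cases "g = h")
        case True
        then have "S (C h) h (enc code g) \<subseteq> {n. E h n = h n}"
          using False E_def by (auto simp: S_def)
        then have "{n. E h n = h n} \<notin> I" using g sub by blast
        then show ?thesis unfolding I_ED_def by blast
      next
        case gh: False
        then have "C h \<noteq> C g" using C_inj by (simp add: inj_eq)
        then have cap: "C h \<inter> C g \<in> I" by (rule ADI)
        have "S (C h) h (enc code g) - C g \<subseteq> {n. E g n = h n}"
          using E_def by (auto simp: S_def)
        moreover have "S (C h) h (enc code g) \<subseteq> (S (C h) h (enc code g) - C g) \<union> (C h \<inter> C g)"
          by (auto simp: S_def)
        ultimately have "{n. E g n = h n} \<notin> I"
        proof (intro notI)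
          assume s1: "S (C h) h (enc code g) - C g \<subseteq> {n. E g n = h n}"
            and s2: "S (C h) h (enc code g) \<subseteq> (S (C h) h (enc code g) - C g) \<union> (C h \<inter> C g)"
            and inI: "{n. E g n = h n} \<in> I"
          have "S (C h) h (enc code g) - C g \<in> I" by (rule sub[OF inI s1])
          then have "(S (C h) h (enc code g) - C g) \<union> (C h \<inter> C g) \<in> I" using cap by (rule un)
          then have "S (C h) h (enc code g) \<in> I" using s2 by (rule sub)
          then show False using g by contradiction
        qed
        then show ?thesis unfolding I_ED_def by blast
      qed
    qed
  qed
  show "I_MED_family I (range E)" unfolding I_MED_family_def using ED MAX by blast
next
  show "borel_family I \<and> T \<in> sets (borel :: (nat \<Rightarrow> nat) measure) \<and> analytic_map C
            \<longrightarrow> analytic (range E)"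
  proof
    assume asm: "borel_family I \<and> T \<in> sets (borel :: (nat \<Rightarrow> nat) measure) \<and> analytic_map C"
    define Gr where "Gr = {(f, chi (C f)) | f. True}"
    have "Gr \<noteq> {}" unfolding Gr_def by blast
    then obtain \<gamma> :: "(nat \<Rightarrow> nat) \<Rightarrow> (nat \<Rightarrow> nat) \<times> (nat \<Rightarrow> bool)"
      where \<gamma>: "continuous_on UNIV \<gamma>" "range \<gamma> = Gr"
      using asm unfolding analytic_map_def analytic_def Gr_def by blast
    define \<Psi> where "\<Psi> = (\<lambda>p::(nat \<Rightarrow> nat) \<times> (nat \<Rightarrow> bool). \<lambda>n. if snd p n then fst p n else enc code (fst p) n)"
    define P where "P = (\<lambda>x. fst (\<gamma> x)) -` T"
    have cfst: "continuous_on UNIV (\<lambda>x. fst (\<gamma> x))" using \<gamma>(1) by (rule continuous_on_fst)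
    have "(\<lambda>x. fst (\<gamma> x)) -` T \<inter> space borel \<in> sets borel"
      by (rule measurable_sets[OF borel_measurable_continuous_onI[OF cfst]]) (use asm in simp)
    then have "analytic P" unfolding P_def by (simp add: borel_analytic)
    moreover have "continuous_on UNIV (\<lambda>x. \<Psi> (\<gamma> x))"
    proof -
      have cP: "continuous_on UNIV \<Psi>" unfolding \<Psi>_def by (rule Psi_cont)
      show ?thesis by (rule continuous_on_compose2[OF cP \<gamma>(1)]) simp
    qed
    ultimately have a1: "analytic ((\<lambda>x. \<Psi> (\<gamma> x)) ` P)" by (rule analytic_img)
    have "space borel - T \<in> sets (borel :: (nat \<Rightarrow> nat) measure)" using asm by blast
    then have "analytic (- T)" by (simp add: borel_analytic Compl_eq_Diff_UNIV)
    then have a2: "analytic (enc code ` (- T))" using enc_cont by (rule analytic_img)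
    have "analytic (enc code ` (- T) \<union> (\<lambda>x. \<Psi> (\<gamma> x)) ` P)"
      by (rule analytic_Un[OF a2 a1])
    moreover have "range E = enc code ` (- T) \<union> (\<lambda>x. \<Psi> (\<gamma> x)) ` P"
    proof
      show "range E \<subseteq> enc code ` (- T) \<union> (\<lambda>x. \<Psi> (\<gamma> x)) ` P"
      proof
        fix u assume "u \<in> range E"
        then obtain f where f: "u = E f" by blast
        show "u \<in> enc code ` (- T) \<union> (\<lambda>x. \<Psi> (\<gamma> x)) ` P"
        proof (cases "f \<in> T")
          case True
          have "(f, chi (C f)) \<in> range \<gamma>" using \<gamma>(2) Gr_def by blast
          then obtain x where x0: "(f, chi (C f)) = \<gamma> x" by (rule rangeE)
          then have x: "\<gamma> x = (f, chi (C f))" by (rule sym)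
          have "x \<in> P" using x True by (simp add: P_def)
          moreover have "\<Psi> (\<gamma> x) = u" unfolding f x \<Psi>_def by (rule ext) (simp add: chi_def E_def True)
          ultimately show ?thesis by blast
        next
          case False
          then have "u = enc code f" unfolding f by (intro ext) (simp add: E_def)
          then show ?thesis using False by blast
        qed
      qed
    next
      show "enc code ` (- T) \<union> (\<lambda>x. \<Psi> (\<gamma> x)) ` P \<subseteq> range E"
      proof
        fix u assume "u \<in> enc code ` (- T) \<union> (\<lambda>x. \<Psi> (\<gamma> x)) ` P"
        then consider (a) f where "f \<notin> T" "u = enc code f" | (b) x where "x \<in> P" "u = \<Psi> (\<gamma> x)" by blast
        then show "u \<in> range E"
        proof cases
          case a
          then have "u = E f" unfolding a(2) by (intro ext) (simp add: E_def a(1))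
          then show ?thesis by blast
        next
          case b
          have "\<gamma> x \<in> Gr" using \<gamma>(2) by blast
          then obtain f where f: "\<gamma> x = (f, chi (C f))" unfolding Gr_def by blast
          then have "f \<in> T" using b by (simp add: P_def)
          then have "u = E f" unfolding b(2) f \<Psi>_def by (intro ext) (simp add: chi_def E_def)
          then show ?thesis by blast
        qed
      qed
    qed
    ultimately show "analytic (range E)" by simp
  qed
qed

end
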